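(* Let $d\ge 2$ and consider a linear multiparameter eigenvalue problem $W_i(\mathbf{x})\mathbf{v}_i=\big(V_{i0}-\sum_{j=1}^d x_jV_{ij}\big)\mathbf{v}_i=0$, $1\le i\le d$, with $V_{ij}\in\mathbb{C}^{n_i\times n_i}$. Let $f_{\text{Dixon}}$ be the tensor Dixon function of $P_i=W_i$ with $x_d$ hidden. Then $f_{\text{Dixon}}$ does not depend on $s_1,\dots,s_{d-1},t_1,\dots,t_{d-1}$, and the generalized eigenvalue problem $f_{\text{Dixon}}(x_d)\mathbf{z}=0$ it yields is the same as the operator determinant generalized eigenvalue problem $(\Delta_d-x_d\Delta_0)\mathbf{z}=0$; precisely, $f_{\text{Dixon}}=c\,(\Delta_d-x_d\Delta_0)$ for some $c\in\{1,-1\}$.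
   Context: Kronecker block determinant: for a $d\times d$ array $M=(M_{ij})$ with $M_{ij}$ of size $n_i\times n_i$, $|M|_\otimes=\sum_{\sigma\in S_d}\mathrm{sgn}(\sigma)\,M_{1,\sigma(1)}\otimes M_{2,\sigma(2)}\otimes\cdots\otimes M_{d,\sigma(d)}$. Operator determinants: $\Delta_0=|(V_{ij})_{1\le i,j\le d}|_\otimes$, and $\Delta_d$ is the Kronecker block determinant of the array obtained from $(V_{ij})_{1\le i,j\le d}$ by replacing its $d$-th column with $(V_{10},\dots,V_{d0})^\top$. Tensor Dixon function with $x_d$ hidden: with variables $s_1,\dots,s_{d-1},t_1,\dots,t_{d-1},x_d$, let $M_{ij}=P_i(t_1,\dots,t_{j-1},s_j,\dots,s_{d-1},x_d)$ for $1\le i,j\le d$ (column $1$ at $(s_1,\dots,s_{d-1},x_d)$, column $d$ at $(t_1,\dots,t_{d-1},x_d)$), and $f_{\text{Dixon}}=|M|_\otimes/\prod_{i=1}^{d-1}(s_i-t_i)$. *)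

theory Defs
  imports "Jordan_Normal_Form.Matrix" "HOL-Combinatorics.Permutations"
begin

definition kron :: "'a::times mat \<Rightarrow> 'a mat \<Rightarrow> 'a mat" where
  "kron A B = mat (dim_row A * dim_row B) (dim_col A * dim_col B)
     (\<lambda>(r, c). A $$ (r div dim_row B, c div dim_col B) * B $$ (r mod dim_row B, c mod dim_col B))"

fun kron_list :: "'a::comm_ring_1 mat list \<Rightarrow> 'a mat" where
  "kron_list [] = 1\<^sub>m 1"
| "kron_list (A # As) = kron A (kron_list As)"

definition kron_det :: "nat \<Rightarrow> (nat \<Rightarrow> nat \<Rightarrow> 'a::comm_ring_1 mat) \<Rightarrow> 'a mat" where
  "kron_det d A = (let N = (\<Prod>i\<in>{1..d}. dim_row (A i i)) in
     mat N N (\<lambda>rc. \<Sum>\<sigma>\<in>{\<sigma>. \<sigma> permutes {1..d}}.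
        of_int (sign \<sigma>) * kron_list (map (\<lambda>i. A i (\<sigma> i)) [1..<d+1]) $$ rc))"

definition W :: "(nat \<Rightarrow> nat) \<Rightarrow> (nat \<Rightarrow> nat \<Rightarrow> complex mat) \<Rightarrow> nat \<Rightarrow> nat \<Rightarrow> (nat \<Rightarrow> complex) \<Rightarrow> complex mat" where
  "W n V d i y = mat (n i) (n i) (\<lambda>rc. V i 0 $$ rc - (\<Sum>j\<in>{1..d}. y j * V i j $$ rc))"

text \<open>Point at which column j of the Dixon array is evaluated:
  (t_1,...,t_{j-1}, s_j,...,s_{d-1}, x_d).\<close>
definition dixon_pt :: "nat \<Rightarrow> (nat \<Rightarrow> complex) \<Rightarrow> (nat \<Rightarrow> complex) \<Rightarrow> complex \<Rightarrow> nat \<Rightarrow> nat \<Rightarrow> complex" where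
  "dixon_pt d s t x j k = (if k = d then x else if k < j then t k else s k)"

definition f_dixon :: "(nat \<Rightarrow> nat) \<Rightarrow> (nat \<Rightarrow> nat \<Rightarrow> complex mat) \<Rightarrow> nat
    \<Rightarrow> (nat \<Rightarrow> complex) \<Rightarrow> (nat \<Rightarrow> complex) \<Rightarrow> complex \<Rightarrow> complex mat" where
  "f_dixon n V d s t x =
     (1 / (\<Prod>i\<in>{1..d-1}. (s i - t i))) \<cdot>\<^sub>m kron_det d (\<lambda>i j. W n V d i (dixon_pt d s t x j))"

definition Delta0 :: "(nat \<Rightarrow> nat \<Rightarrow> complex mat) \<Rightarrow> nat \<Rightarrow> complex mat" where
  "Delta0 V d = kron_det d (\<lambda>i j. V i j)"

definition Deltad :: "(nat \<Rightarrow> nat \<Rightarrow> complex mat) \<Rightarrow> nat \<Rightarrow> complex mat" where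
  "Deltad V d = kron_det d (\<lambda>i j. if j = d then V i 0 else V i j)"

end

theory Submission
  imports Defs "Jordan_Normal_Form.Determinant"
begin


definition sh :: "nat \<Rightarrow> nat \<Rightarrow> nat" where
  "sh d i = (if i < d then Suc i else if i = d then 0 else i)"
definition ush :: "nat \<Rightarrow> nat \<Rightarrow> nat" where
  "ush d i = (if i = 0 then d else if i \<le> d then i - 1 else i)"

lemma sh_ush[simp]: "sh d (ush d i) = i" "ush d (sh d i) = i"
  unfolding sh_def ush_def by auto

lemma sh_permutes: "sh d permutes {0..d}"
proof (rule bij_imp_permutes)
  show "bij_betw (sh d) {0..d} {0..d}"
    by (rule bij_betw_byWitness[where f'="ush d"]) (auto simp: sh_def ush_def)
qed (auto simp: sh_def)

lemma ush_permutes: "ush d permutes {0..d}"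
proof (rule bij_imp_permutes)
  show "bij_betw (ush d) {0..d} {0..d}"
    by (rule bij_betw_byWitness[where f'="sh d"]) (auto simp: sh_def ush_def)
qed (auto simp: ush_def)

lemma sign_conj:
  assumes "p permutes S" "finite S"
  shows "sign (ush d \<circ> p \<circ> sh d) = sign p"
proof -
  have pp: "permutation p" using assms permutation_permutes by blast
  have ps: "permutation (sh d)" "permutation (ush d)"
    using sh_permutes ush_permutes permutation_permutes by blast+
  have "ush d \<circ> sh d = id" by (auto simp: fun_eq_iff)
  hence "sign (ush d) * sign (sh d) = 1"
    using sign_compose[OF ps(2) ps(1)] by (simp add: sign_id)
  moreover have "sign (ush d \<circ> p \<circ> sh d) = sign (ush d) * sign p * sign (sh d)"
    using ps pp by (simp add: sign_compose permutation_compose)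
  ultimately show ?thesis
    by (metis mult.assoc mult.commute mult.left_neutral)
qed

lemma conj_permutes:
  assumes "p permutes {1..d}"
  shows "ush d \<circ> p \<circ> sh d permutes {0..<d}"
proof (rule permutes_superset)
  have "p permutes {0..d}" using assms by (rule permutes_subset) auto
  then show "ush d \<circ> p \<circ> sh d permutes {0..d}"
    using sh_permutes ush_permutes by (blast intro: permutes_compose)
  fix x assume "x \<in> {0..d} - {0..<d}"
  hence "x = d" by auto
  moreover have "p 0 = 0" using assms by (simp add: permutes_not_in)
  ultimately show "(ush d \<circ> p \<circ> sh d) x = x" by (simp add: sh_def ush_def)
qed

lemma conj_permutes':
  assumes "q permutes {0..<d}"
  shows "sh d \<circ> q \<circ> ush d permutes {1..d}"
proof (rule permutes_superset)
  have "q permutes {0..d}" using assms by (rule permutes_subset) auto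
  then show "sh d \<circ> q \<circ> ush d permutes {0..d}"
    using sh_permutes ush_permutes by (blast intro: permutes_compose)
  fix x assume "x \<in> {0..d} - {1..d}"
  hence "x = 0" by auto
  moreover have "q d = d" using assms by (simp add: permutes_not_in)
  ultimately show "(sh d \<circ> q \<circ> ush d) x = x" by (simp add: sh_def ush_def)
qed

lemma det_shift:
  fixes a :: "nat \<Rightarrow> nat \<Rightarrow> 'a::comm_ring_1"
  shows "(\<Sum>\<sigma>\<in>{\<sigma>. \<sigma> permutes {1..d}}. of_int (sign \<sigma>) * (\<Prod>i<d. a (Suc i) (\<sigma> (Suc i))))
     = det (mat d d (\<lambda>(i,j). a (Suc i) (Suc j)))"
proof -
  have "det (mat d d (\<lambda>(i,j). a (Suc i) (Suc j))) =
     (\<Sum>q\<in>{q. q permutes {0..<d}}. of_int (sign q) * (\<Prod>i<d. a (Suc i) (Suc (q i))))"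
    unfolding det_def' [OF mat_carrier]
    by (intro sum.cong refl arg_cong2[where f="(*)"] prod.cong) (auto simp: permutes_in_image)
  also have "\<dots> = (\<Sum>\<sigma>\<in>{\<sigma>. \<sigma> permutes {1..d}}. of_int (sign \<sigma>) * (\<Prod>i<d. a (Suc i) (\<sigma> (Suc i))))"
  proof (rule sum.reindex_bij_witness[where i="\<lambda>\<sigma>. ush d \<circ> \<sigma> \<circ> sh d" and j="\<lambda>q. sh d \<circ> q \<circ> ush d"])
    fix q assume q: "q \<in> {q. q permutes {0..<d}}"
    show "ush d \<circ> (sh d \<circ> q \<circ> ush d) \<circ> sh d = q" by (auto simp: fun_eq_iff)
    show "sh d \<circ> q \<circ> ush d \<in> {\<sigma>. \<sigma> permutes {1..d}}" using q conj_permutes' by auto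
    have "sign (sh d \<circ> q \<circ> ush d) = sign q"
    proof -
      have "sign (ush d \<circ> (sh d \<circ> q \<circ> ush d) \<circ> sh d) = sign (sh d \<circ> q \<circ> ush d)"
        using conj_permutes'[of q d] q by (intro sign_conj) auto
      moreover have "ush d \<circ> (sh d \<circ> q \<circ> ush d) \<circ> sh d = q" by (auto simp: fun_eq_iff)
      ultimately show ?thesis by simp
    qed
    moreover have "(\<Prod>i<d. a (Suc i) ((sh d \<circ> q \<circ> ush d) (Suc i))) = (\<Prod>i<d. a (Suc i) (Suc (q i)))"
    proof (rule prod.cong)
      fix i assume "i \<in> {..<d}"
      hence "q i < d" using q permutes_in_image by fastforce
      thus "a (Suc i) ((sh d \<circ> q \<circ> ush d) (Suc i)) = a (Suc i) (Suc (q i))"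
        using \<open>i \<in> {..<d}\<close> by (simp add: sh_def ush_def)
    qed simp
    ultimately show "of_int (sign (sh d \<circ> q \<circ> ush d)) * (\<Prod>i<d. a (Suc i) ((sh d \<circ> q \<circ> ush d) (Suc i)))
        = of_int (sign q) * (\<Prod>i<d. a (Suc i) (Suc (q i)))" by simp
  next
    fix \<sigma> assume s: "\<sigma> \<in> {\<sigma>. \<sigma> permutes {1..d}}"
    show "sh d \<circ> (ush d \<circ> \<sigma> \<circ> sh d) \<circ> ush d = \<sigma>" by (auto simp: fun_eq_iff)
    show "ush d \<circ> \<sigma> \<circ> sh d \<in> {q. q permutes {0..<d}}" using s conj_permutes by auto
  qed
  finally show ?thesis by simp
qed



fun dig :: "nat list \<Rightarrow> nat \<Rightarrow> nat \<Rightarrow> nat" where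
  "dig [] i r = 0"
| "dig (m # ms) 0 r = r div prod_list ms"
| "dig (m # ms) (Suc i) r = dig ms i (r mod prod_list ms)"

lemma dig_lt: "r < prod_list ms \<Longrightarrow> i < length ms \<Longrightarrow> dig ms i r < ms ! i"
proof (induction ms arbitrary: i r)
  case Nil thus ?case by simp
next
  case (Cons m ms)
  show ?case
  proof (cases i)
    case 0
    thus ?thesis using Cons.prems by (simp add: less_mult_imp_div_less mult.commute)
  next
    case (Suc k)
    have "prod_list ms > 0" using Cons.prems by (cases "prod_list ms") auto
    thus ?thesis using Cons.prems Suc by (auto intro!: Cons.IH)
  qed
qed

lemma kron_list_entry:
  assumes "length As = length ms" "\<And>i. i < length ms \<Longrightarrow> As ! i \<in> carrier_mat (ms ! i) (ms ! i)"
  shows "kron_list As \<in> carrier_mat (prod_list ms) (prod_list ms) \<and>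
    (\<forall>r c. r < prod_list ms \<longrightarrow> c < prod_list ms \<longrightarrow>
      kron_list As $$ (r, c) = (\<Prod>i<length ms. As ! i $$ (dig ms i r, dig ms i c)))"
  using assms
proof (induction As arbitrary: ms)
  case Nil thus ?case by auto
next
  case (Cons A As)
  then obtain m ms' where ms: "ms = m # ms'" by (cases ms) auto
  have A: "A \<in> carrier_mat m m" using Cons.prems(2)[of 0] ms by auto
  have IH: "kron_list As \<in> carrier_mat (prod_list ms') (prod_list ms') \<and>
    (\<forall>r c. r < prod_list ms' \<longrightarrow> c < prod_list ms' \<longrightarrow>
      kron_list As $$ (r, c) = (\<Prod>i<length ms'. As ! i $$ (dig ms' i r, dig ms' i c)))"
    using Cons.prems ms by (intro Cons.IH) force+
  show ?case
  proof (intro conjI allI impI)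
    show "kron_list (A # As) \<in> carrier_mat (prod_list ms) (prod_list ms)"
      using A IH ms by (auto simp: kron_def)
    fix r c assume r: "r < prod_list ms" and c: "c < prod_list ms"
    have P: "prod_list ms' > 0" using r ms by (cases "prod_list ms'") auto
    have "kron_list (A # As) $$ (r, c) = A $$ (r div prod_list ms', c div prod_list ms') *
       kron_list As $$ (r mod prod_list ms', c mod prod_list ms')"
      using A IH ms r c by (auto simp: kron_def)
    also have "\<dots> = A $$ (r div prod_list ms', c div prod_list ms') *
       (\<Prod>i<length ms'. As ! i $$ (dig ms' i (r mod prod_list ms'), dig ms' i (c mod prod_list ms')))"
      using IH P by simp
    also have "\<dots> = (\<Prod>i<length ms. (A # As) ! i $$ (dig ms i r, dig ms i c))"
      unfolding ms by (simp only: length_Cons prod.lessThan_Suc_shift) simp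
    finally show "kron_list (A # As) $$ (r, c) = (\<Prod>i<length ms. (A # As) ! i $$ (dig ms i r, dig ms i c))" .
  qed
qed

lemma kron_det_entry:
  fixes A :: "nat \<Rightarrow> nat \<Rightarrow> 'a::comm_ring_1 mat"
  assumes "\<And>i j. i \<in> {1..d} \<Longrightarrow> j \<in> {1..d} \<Longrightarrow> A i j \<in> carrier_mat (n i) (n i)"
  defines "ms \<equiv> map n [1..<d+1]"
  shows "kron_det d A \<in> carrier_mat (prod_list ms) (prod_list ms)"
    and "\<And>r c. r < prod_list ms \<Longrightarrow> c < prod_list ms \<Longrightarrow>
       kron_det d A $$ (r,c) = det (mat d d (\<lambda>(i,j). A (Suc i) (Suc j) $$ (dig ms i r, dig ms i c)))"
proof -
  have N: "(\<Prod>i\<in>{1..d}. dim_row (A i i)) = prod_list ms"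
  proof -
    have "(\<Prod>i\<in>{1..d}. dim_row (A i i)) = (\<Prod>i\<in>{1..d}. n i)"
      using assms(1) by (intro prod.cong) auto
    also have "\<dots> = prod_list ms" unfolding ms_def
      unfolding prod.distinct_set_conv_list[symmetric, OF distinct_upt] set_upt
      by (simp only: Suc_eq_plus1[symmetric] atLeastLessThanSuc_atLeastAtMost)
    finally show ?thesis .
  qed
  show "kron_det d A \<in> carrier_mat (prod_list ms) (prod_list ms)"
    unfolding kron_det_def N Let_def by (rule mat_carrier)
  fix r c assume r: "r < prod_list ms" and c: "c < prod_list ms"
  have "kron_det d A $$ (r,c) = (\<Sum>\<sigma>\<in>{\<sigma>. \<sigma> permutes {1..d}}.
        of_int (sign \<sigma>) * kron_list (map (\<lambda>i. A i (\<sigma> i)) [1..<d+1]) $$ (r,c))"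
    unfolding kron_det_def N Let_def using r c by simp
  also have "\<dots> = (\<Sum>\<sigma>\<in>{\<sigma>. \<sigma> permutes {1..d}}. of_int (sign \<sigma>) *
       (\<Prod>i<d. A (Suc i) (\<sigma> (Suc i)) $$ (dig ms i r, dig ms i c)))"
  proof (rule sum.cong[OF refl])
    fix \<sigma> assume "\<sigma> \<in> {\<sigma>. \<sigma> permutes {1..d}}"
    hence s: "\<sigma> permutes {1..d}" by simp
    have "kron_list (map (\<lambda>i. A i (\<sigma> i)) [1..<d+1]) $$ (r,c) =
       (\<Prod>i<length ms. (map (\<lambda>i. A i (\<sigma> i)) [1..<d+1]) ! i $$ (dig ms i r, dig ms i c))"
    proof (rule kron_list_entry[THEN conjunct2, rule_format, OF _ _ r c])
      show "length (map (\<lambda>i. A i (\<sigma> i)) [1..<d + 1]) = length ms" by (simp add: ms_def del: upt_Suc)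
      fix i assume "i < length ms"
      hence i: "i < d" by (simp add: ms_def del: upt_Suc)
      have "\<sigma> (Suc i) \<in> {1..d}" using s i permutes_in_image[OF s] by auto
      thus "map (\<lambda>i. A i (\<sigma> i)) [1..<d + 1] ! i \<in> carrier_mat (ms ! i) (ms ! i)"
        using i assms(1)[of "Suc i" "\<sigma> (Suc i)"] by (simp add: ms_def nth_map_upt del: upt_Suc)
    qed
    also have "\<dots> = (\<Prod>i<d. A (Suc i) (\<sigma> (Suc i)) $$ (dig ms i r, dig ms i c))"
      by (intro prod.cong) (auto simp: ms_def nth_map_upt simp del: upt_Suc)
    finally show "of_int (sign \<sigma>) * kron_list (map (\<lambda>i. A i (\<sigma> i)) [1..<d+1]) $$ (r,c) =
       of_int (sign \<sigma>) * (\<Prod>i<d. A (Suc i) (\<sigma> (Suc i)) $$ (dig ms i r, dig ms i c))" by simp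
  qed
  also have "\<dots> = det (mat d d (\<lambda>(i,j). A (Suc i) (Suc j) $$ (dig ms i r, dig ms i c)))"
    using det_shift[where a="\<lambda>i j. A i j $$ (dig ms (i - 1) r, dig ms (i - 1) c)"] by simp
  finally show "kron_det d A $$ (r,c) = det (mat d d (\<lambda>(i,j). A (Suc i) (Suc j) $$ (dig ms i r, dig ms i c)))" .
qed



lemma scalar_id:
  fixes a :: "nat \<Rightarrow> nat \<Rightarrow> complex" and s t :: "nat \<Rightarrow> complex"
  assumes d: "d \<ge> 1"
  shows "det (mat d d (\<lambda>(i,j). a i 0 - (\<Sum>k\<in>{1..d}. dixon_pt d s t x (Suc j) k * a i k)))
    = (\<Prod>l\<in>{1..d-1}. (s l - t l)) * ((-1)^(d-1) *
       (det (mat d d (\<lambda>(i,j). if Suc j = d then a i 0 else a i (Suc j)))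
        - x * det (mat d d (\<lambda>(i,j). a i (Suc j)))))"
proof -
  let ?p = "dixon_pt d s t x"
  define Zf where "Zf f = mat d d (\<lambda>(i,j). if j = 0 then f i else a i j)" for f :: "nat \<Rightarrow> complex"
  define Df where "Df f = mat d d (\<lambda>(i,j). if j = d - 1 then f i else a i (Suc j))" for f :: "nat \<Rightarrow> complex"
  define C where "C i = cofactor (Zf (\<lambda>_. 0)) i 0" for i
  have d0: "0 < d" using d by simp
  have Zf_car: "Zf f \<in> carrier_mat d d" for f unfolding Zf_def by simp
  have Df_car: "Df f \<in> carrier_mat d d" for f unfolding Df_def by simp
  have L1: "det (Zf f) = (\<Sum>i<d. f i * C i)" for f
  proof -
    have "det (Zf f) = (\<Sum>i<d. Zf f $$ (i,0) * cofactor (Zf f) i 0)"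
      by (rule laplace_expansion_column[OF Zf_car d0])
    also have "\<dots> = (\<Sum>i<d. f i * C i)"
    proof (rule sum.cong[OF refl])
      fix i assume i: "i \<in> {..<d}"
      have "mat_delete (Zf f) i 0 = mat_delete (Zf (\<lambda>_. 0)) i 0"
        by (rule eq_matI) (auto simp: mat_delete_def Zf_def)
      thus "Zf f $$ (i,0) * cofactor (Zf f) i 0 = f i * C i"
        using i d0 by (simp add: C_def cofactor_def Zf_def)
    qed
    finally show ?thesis .
  qed
  have L2: "(\<Sum>i<d. a i k * C i) = 0" if k: "1 \<le> k" "k < d" for k
  proof -
    have "det (Zf (\<lambda>i. a i k)) = 0"
    proof (rule det_identical_columns[OF Zf_car, of 0 k])
      show "col (Zf (\<lambda>i. a i k)) 0 = col (Zf (\<lambda>i. a i k)) k"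
        using k by (intro eq_vecI) (auto simp: Zf_def)
    qed (use k in auto)
    thus ?thesis using L1 by simp
  qed
  have L3: "det (Df f) = (-1)^(d-1) * (\<Sum>i<d. f i * C i)" for f
  proof -
    have dl: "d - 1 < d" using d by simp
    have "det (Df f) = (\<Sum>i<d. Df f $$ (i,d-1) * cofactor (Df f) i (d-1))"
      by (rule laplace_expansion_column[OF Df_car dl])
    also have "\<dots> = (\<Sum>i<d. (-1)^(d-1) * (f i * C i))"
    proof (rule sum.cong[OF refl])
      fix i assume i: "i \<in> {..<d}"
      have "mat_delete (Df f) i (d-1) = mat_delete (Zf (\<lambda>_. 0)) i 0"
        by (rule eq_matI) (auto simp: mat_delete_def Zf_def Df_def)
      hence "cofactor (Df f) i (d-1) = (-1)^(d-1) * C i"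
        by (simp add: C_def cofactor_def power_add)
      thus "Df f $$ (i,d-1) * cofactor (Df f) i (d-1) = (-1)^(d-1) * (f i * C i)"
        using i d0 by (simp add: Df_def)
    qed
    finally show ?thesis by (simp add: sum_distrib_left)
  qed
  have sq: "((-1::complex)^(d-1)) * (-1)^(d-1) = 1"
    by (simp add: power_add[symmetric])
  have Dd: "mat d d (\<lambda>(i,j). if Suc j = d then a i 0 else a i (Suc j)) = Df (\<lambda>i. a i 0)"
    by (rule eq_matI) (auto simp: Df_def)
  have D0: "mat d d (\<lambda>(i,j). a i (Suc j)) = Df (\<lambda>i. a i d)"
    by (rule eq_matI) (auto simp: Df_def)
  define Z where "Z = Zf (\<lambda>i. a i 0 - (\<Sum>k\<in>{1..d}. ?p 1 k * a i k))"
  define T where "T = mat d d (\<lambda>(l,j). if l = 0 then 1 else if l \<le> j then s l - t l else (0::complex))"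
  have T_car: "T \<in> carrier_mat d d" unfolding T_def by simp
  have detT: "det T = (\<Prod>l\<in>{1..d-1}. (s l - t l))"
  proof -
    have "det T = prod_list (diag_mat T)"
      by (rule det_upper_triangular[OF _ T_car]) (auto simp: T_def upper_triangular_def)
    also have "\<dots> = (\<Prod>l\<in>{0..<d}. T $$ (l,l))"
      unfolding diag_mat_def prod.distinct_set_conv_list[symmetric, OF distinct_upt] set_upt
      using T_car by simp
    also have "\<dots> = T $$ (0,0) * (\<Prod>l\<in>{Suc 0..<d}. T $$ (l,l))"
      using d0 by (simp add: prod.atLeast_Suc_lessThan)
    also have "\<dots> = (\<Prod>l\<in>{1..d-1}. (s l - t l))"
    proof -
      have "{Suc 0..<d} = {1..d-1}" using d by auto
      thus ?thesis using d0 by (auto simp: T_def intro!: prod.cong)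
    qed
    finally show ?thesis .
  qed
  have AZT: "mat d d (\<lambda>(i,j). a i 0 - (\<Sum>k\<in>{1..d}. ?p (Suc j) k * a i k)) = Z * T"
  proof (rule eq_matI)
    fix i j assume "i < dim_row (Z * T)" "j < dim_col (Z * T)"
    hence i: "i < d" and j: "j < d" by (auto simp: Z_def Zf_def T_def)
    have "(Z * T) $$ (i,j) = (\<Sum>l\<in>{0..<d}. Z $$ (i,l) * T $$ (l,j))"
      using i j by (simp add: Z_def Zf_def T_def scalar_prod_def)
    also have "\<dots> = Z $$ (i,0) * T $$ (0,j) + (\<Sum>l\<in>{Suc 0..<d}. Z $$ (i,l) * T $$ (l,j))"
      using d0 by (simp add: sum.atLeast_Suc_lessThan)
    also have "\<dots> = (a i 0 - (\<Sum>k\<in>{1..d}. ?p 1 k * a i k)) +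
        (\<Sum>l\<in>{Suc 0..<d}. (if l \<le> j then (s l - t l) * a i l else 0))"
      using i j by (auto simp: Z_def Zf_def T_def intro!: sum.cong)
    also have "\<dots> = a i 0 - (\<Sum>k\<in>{1..d}. ?p (Suc j) k * a i k)"
    proof -
      have "(\<Sum>k\<in>{1..d}. ?p 1 k * a i k) - (\<Sum>k\<in>{1..d}. ?p (Suc j) k * a i k)
          = (\<Sum>k\<in>{1..d}. (?p 1 k - ?p (Suc j) k) * a i k)"
        by (simp add: sum_subtractf left_diff_distrib)
      also have "\<dots> = (\<Sum>k\<in>{1..<d}. (?p 1 k - ?p (Suc j) k) * a i k) + (?p 1 d - ?p (Suc j) d) * a i d"
      proof -
        have "{1..d} = insert d {1..<d}" using d by auto
        thus ?thesis by simp
      qed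
      also have "\<dots> = (\<Sum>l\<in>{Suc 0..<d}. (if l \<le> j then (s l - t l) * a i l else 0))"
        by (auto simp: dixon_pt_def intro!: sum.cong)
      finally show ?thesis by (simp add: algebra_simps)
    qed
    finally show "mat d d (\<lambda>(i,j). a i 0 - (\<Sum>k\<in>{1..d}. ?p (Suc j) k * a i k)) $$ (i,j) = (Z * T) $$ (i,j)"
      using i j by simp
  qed (auto simp: Z_def Zf_def T_def)
  have detZ: "det Z = (-1)^(d-1) * (det (Df (\<lambda>i. a i 0)) - x * det (Df (\<lambda>i. a i d)))"
  proof -
    define S where "S k = (\<Sum>i<d. a i k * C i)" for k
    have "det Z = (\<Sum>i<d. (a i 0 - (\<Sum>k\<in>{1..d}. ?p 1 k * a i k)) * C i)"
      unfolding Z_def by (rule L1)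
    also have "\<dots> = S 0 - (\<Sum>k\<in>{1..d}. ?p 1 k * S k)"
      by (simp add: S_def left_diff_distrib sum_subtractf sum_distrib_left sum_distrib_right
          mult.assoc) (rule sum.swap)
    also have "(\<Sum>k\<in>{1..d}. ?p 1 k * S k) = x * S d"
    proof -
      have "{1..d} = insert d {1..<d}" using d by auto
      moreover have "(\<Sum>k\<in>{1..<d}. ?p 1 k * S k) = 0"
        by (rule sum.neutral) (auto simp: S_def L2)
      ultimately show ?thesis by (simp add: dixon_pt_def)
    qed
    also have "S 0 = (-1)^(d-1) * det (Df (\<lambda>i. a i 0))"
      unfolding L3 S_def using sq by (simp add: mult.assoc[symmetric])
    also have "S d = (-1)^(d-1) * det (Df (\<lambda>i. a i d))"
      unfolding L3 S_def using sq by (simp add: mult.assoc[symmetric])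
    finally show ?thesis by (simp add: algebra_simps)
  qed
  show ?thesis
  proof -
    have "det (Z * T) = det Z * det T"
      by (rule det_mult[OF _ T_car]) (simp add: Z_def Zf_car)
    thus ?thesis unfolding AZT Dd D0 by (simp add: detZ detT algebra_simps)
  qed
qed



theorem propositionA1:
  fixes d :: nat and n :: "nat \<Rightarrow> nat" and V :: "nat \<Rightarrow> nat \<Rightarrow> complex mat"
  assumes "d \<ge> 2"
    and "\<And>i j. i \<in> {1..d} \<Longrightarrow> j \<in> {0..d} \<Longrightarrow> V i j \<in> carrier_mat (n i) (n i)"
  shows "\<exists>c \<in> {1, -1 :: complex}. \<forall>s t x.
           (\<forall>i\<in>{1..d-1}. s i \<noteq> t i) \<longrightarrow>
           f_dixon n V d s t x = c \<cdot>\<^sub>m (Deltad V d - x \<cdot>\<^sub>m Delta0 V d)"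
proof (intro bexI allI impI)
  show "(-1::complex)^(d-1) \<in> {1, -1}"
    by (cases "even (d-1)") auto
  fix s t :: "nat \<Rightarrow> complex" and x :: complex
  assume st: "\<forall>i\<in>{1..d-1}. s i \<noteq> t i"
  define ms where "ms = map n [1..<d+1]"
  define P where "P = (\<Prod>l\<in>{1..d-1}. (s l - t l))"
  have P0: "P \<noteq> 0" unfolding P_def using st by (simp add: prod_zero_iff)
  have d1: "d \<ge> 1" using assms(1) by simp
  define A1 where "A1 = (\<lambda>i j. W n V d i (dixon_pt d s t x j))"
  define Ad where "Ad = (\<lambda>i j. if j = d then V i 0 else V i j)"
  have A1c: "A1 i j \<in> carrier_mat (n i) (n i)" for i j by (simp add: A1_def W_def)
  have Adc: "i \<in> {1..d} \<Longrightarrow> j \<in> {1..d} \<Longrightarrow> Ad i j \<in> carrier_mat (n i) (n i)" for i j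
    using assms(2) by (auto simp: Ad_def)
  have A0c: "i \<in> {1..d} \<Longrightarrow> j \<in> {1..d} \<Longrightarrow> V i j \<in> carrier_mat (n i) (n i)" for i j
    using assms(2) by auto
  have K1: "kron_det d A1 \<in> carrier_mat (prod_list ms) (prod_list ms)"
     "\<And>r c. r < prod_list ms \<Longrightarrow> c < prod_list ms \<Longrightarrow>
       kron_det d A1 $$ (r,c) = det (mat d d (\<lambda>(i,j). A1 (Suc i) (Suc j) $$ (dig ms i r, dig ms i c)))"
    unfolding ms_def by (rule kron_det_entry, rule A1c)+
  have Kd: "kron_det d Ad \<in> carrier_mat (prod_list ms) (prod_list ms)"
     "\<And>r c. r < prod_list ms \<Longrightarrow> c < prod_list ms \<Longrightarrow>
       kron_det d Ad $$ (r,c) = det (mat d d (\<lambda>(i,j). Ad (Suc i) (Suc j) $$ (dig ms i r, dig ms i c)))"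
    unfolding ms_def by (rule kron_det_entry, erule (1) Adc)+
  have K0: "kron_det d V \<in> carrier_mat (prod_list ms) (prod_list ms)"
     "\<And>r c. r < prod_list ms \<Longrightarrow> c < prod_list ms \<Longrightarrow>
       kron_det d V $$ (r,c) = det (mat d d (\<lambda>(i,j). V (Suc i) (Suc j) $$ (dig ms i r, dig ms i c)))"
    unfolding ms_def by (rule kron_det_entry, erule (1) A0c)+
  have DdA: "Deltad V d = kron_det d Ad" unfolding Deltad_def Ad_def ..
  have D0A: "Delta0 V d = kron_det d V" unfolding Delta0_def ..
  have FA: "f_dixon n V d s t x = (1 / P) \<cdot>\<^sub>m kron_det d A1"
    unfolding f_dixon_def P_def A1_def ..
  show "f_dixon n V d s t x = (-1)^(d-1) \<cdot>\<^sub>m (Deltad V d - x \<cdot>\<^sub>m Delta0 V d)"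
    unfolding FA DdA D0A
  proof (rule eq_matI)
    fix r q assume "r < dim_row ((-1)^(d-1) \<cdot>\<^sub>m (kron_det d Ad - x \<cdot>\<^sub>m kron_det d V))"
      "q < dim_col ((-1)^(d-1) \<cdot>\<^sub>m (kron_det d Ad - x \<cdot>\<^sub>m kron_det d V))"
    hence r: "r < prod_list ms" and q: "q < prod_list ms" using Kd(1) K0(1) by auto
    define a where "a i k = V (Suc i) k $$ (dig ms i r, dig ms i q)" for i k
    have dl: "dig ms i r < n (Suc i)" "dig ms i q < n (Suc i)" if "i < d" for i
      using dig_lt[OF r, of i] dig_lt[OF q, of i] that by (auto simp: ms_def nth_map_upt simp del: upt_Suc)
    have e1: "kron_det d A1 $$ (r,q) = det (mat d d (\<lambda>(i,j). a i 0 - (\<Sum>k\<in>{1..d}. dixon_pt d s t x (Suc j) k * a i k)))"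
      unfolding K1(2)[OF r q]
      by (rule arg_cong[where f=det], rule eq_matI) (auto simp: A1_def W_def a_def dl)
    have ed: "kron_det d Ad $$ (r,q) = det (mat d d (\<lambda>(i,j). if Suc j = d then a i 0 else a i (Suc j)))"
      unfolding Kd(2)[OF r q]
      by (rule arg_cong[where f=det], rule eq_matI) (auto simp: Ad_def a_def)
    have e0: "kron_det d V $$ (r,q) = det (mat d d (\<lambda>(i,j). a i (Suc j)))"
      unfolding K0(2)[OF r q]
      by (rule arg_cong[where f=det], rule eq_matI) (auto simp: a_def)
    have "((1 / P) \<cdot>\<^sub>m kron_det d A1) $$ (r,q) = (1/P) * kron_det d A1 $$ (r,q)"
      using K1(1) r q by simp
    also have "\<dots> = (-1)^(d-1) * (kron_det d Ad $$ (r,q) - x * kron_det d V $$ (r,q))"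
      unfolding e1 ed e0 scalar_id[OF d1] P_def[symmetric] using P0 by simp
    also have "\<dots> = ((-1)^(d-1) \<cdot>\<^sub>m (kron_det d Ad - x \<cdot>\<^sub>m kron_det d V)) $$ (r,q)"
      using Kd(1) K0(1) r q by simp
    finally show "((1 / P) \<cdot>\<^sub>m kron_det d A1) $$ (r,q) = ((-1)^(d-1) \<cdot>\<^sub>m (kron_det d Ad - x \<cdot>\<^sub>m kron_det d V)) $$ (r,q)" .
  qed (use K1(1) Kd(1) K0(1) in auto)
qed

end
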